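(* Consider the following binary deterministic control system with parameters $a'=2$, $\sigma_{v2}'=1$, $p_1'=1$. For $n\ge 0$ and $i\in\mathbb Z$: $x^{n+1}_i=x^n_{i-2}\oplus u^n_{1,i}\oplus u^n_{2,i}\oplus w^n_i$, $y^n_{1,i}=x^n_i$, $y^n_{2,i}=x^n_i\oplus v^n_i$, with $x^0_i=0$ for all $i$. For every $n$, $w^n_i=0$ for $i\ge 0$ and $(w^n_i)_{i<0}$ are i.i.d. Bernoulli$(1/2)$; $v^n_i=0$ for $i\ge 1$ and $(v^n_i)_{i<1}$ are i.i.d. Bernoulli$(1/2)$; all $w$'s and $v$'s are independent. Controllers are causal (controller $j$'s input at time $n$ is a function of $y^0_j,\dots,y^n_j$) and the first controller must satisfy $u^n_{1,i}=0$ for all $i\ge 1$. Call $d$ an achieved distortion level if $x^n_i=0$ for all $i\ge d$ and all $n\ge0$ with probability $1$. Let the controllers use $u^n_{1,i}=y^n_{1,i-2}$ for $i\le 0$ and $u^n_{1,i}=0$ for $i\ge 1$; $u^n_{2,i}=y^n_{2,i-2}$ for $i\ge 3$ and $u^n_{2,i}=0$ for $i\le 2$. Then this strategy achieves distortion level $d=2$, which is the minimum possible achieved distortion level among all admissible strategies.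
   Context: $\oplus$ is XOR. In binary-expansion notation the strategy reads $u_1[n]=y^n_{1,-2}.y^n_{1,-3}y^n_{1,-4}\cdots$ and $u_2[n]=\cdots y^n_{2,2}y^n_{2,1}000.0\cdots$, where the digit immediately left of the binary point has index $0$. *)

theory Defs
  imports "HOL-Probability.Probability"
begin

type_synonym sig = "int \<Rightarrow> bool"

text \<open>A controller: at time n, maps the observation history (Y k for k = 0..n)
  to the control signal u at time n.\<close>
type_synonym ctrl = "nat \<Rightarrow> (nat \<Rightarrow> sig) \<Rightarrow> sig"

definition bxor :: "bool \<Rightarrow> bool \<Rightarrow> bool" (infixl "XOR" 65) where
  "a XOR b = (a \<noteq> b)"

text \<open>Noise coordinates: Inl (n,i) carries w^n_i, Inr (n,i) carries v^n_i.\<close>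
type_synonym noise_idx = "(nat \<times> int) + (nat \<times> int)"

definition noise_space :: "(noise_idx \<Rightarrow> bool) measure" where
  "noise_space = PiM UNIV (\<lambda>_. measure_pmf (bernoulli_pmf (1/2)))"

definition wn :: "(noise_idx \<Rightarrow> bool) \<Rightarrow> nat \<Rightarrow> sig" where
  "wn \<omega> n i = (i < 0 \<and> \<omega> (Inl (n, i)))"

definition vn :: "(noise_idx \<Rightarrow> bool) \<Rightarrow> nat \<Rightarrow> sig" where
  "vn \<omega> n i = (i < 1 \<and> \<omega> (Inr (n, i)))"

text \<open>traj g1 g2 \<omega> n k = x^k for k \<le> n (and all-zero for k > n).
  y1 = x, y2 = x XOR v; observations at times > n are masked to 0.\<close>
fun traj :: "ctrl \<Rightarrow> ctrl \<Rightarrow> (noise_idx \<Rightarrow> bool) \<Rightarrow> nat \<Rightarrow> (nat \<Rightarrow> sig)" where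
  "traj g1 g2 \<omega> 0 = (\<lambda>k i. False)"
| "traj g1 g2 \<omega> (Suc n) =
     (let X = traj g1 g2 \<omega> n;
          Y1 = (\<lambda>k i. k \<le> n \<and> X k i);
          Y2 = (\<lambda>k i. k \<le> n \<and> (X k i XOR vn \<omega> k i))
      in X(Suc n := (\<lambda>i. X n (i - 2) XOR g1 n Y1 i XOR g2 n Y2 i XOR wn \<omega> n i)))"

definition state :: "ctrl \<Rightarrow> ctrl \<Rightarrow> (noise_idx \<Rightarrow> bool) \<Rightarrow> nat \<Rightarrow> sig" where
  "state g1 g2 \<omega> n = traj g1 g2 \<omega> n n"

definition causal :: "ctrl \<Rightarrow> bool" where
  "causal g \<longleftrightarrow> (\<forall>n Y Y'. (\<forall>k\<le>n. Y k = Y' k) \<longrightarrow> g n Y = g n Y')"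

definition admissible :: "ctrl \<Rightarrow> ctrl \<Rightarrow> bool" where
  "admissible g1 g2 \<longleftrightarrow> causal g1 \<and> causal g2 \<and> (\<forall>n Y i. i \<ge> 1 \<longrightarrow> \<not> g1 n Y i)"

definition achieves :: "ctrl \<Rightarrow> ctrl \<Rightarrow> int \<Rightarrow> bool" where
  "achieves g1 g2 d \<longleftrightarrow> (AE \<omega> in noise_space. \<forall>n i. i \<ge> d \<longrightarrow> \<not> state g1 g2 \<omega> n i)"

definition strat1 :: ctrl where
  "strat1 n Y i = (if i \<le> 0 then Y n (i - 2) else False)"

definition strat2 :: ctrl where
  "strat2 n Y i = (if i \<ge> 3 then Y n (i - 2) else False)"

end

theory Submission
  imports Defs
begin

lemma traj_stable: "k \<le> n \<Longrightarrow> traj g1 g2 \<omega> n k = traj g1 g2 \<omega> k k"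
proof (induction n)
  case 0 then show ?case by simp
next
  case (Suc n)
  then show ?case by (cases "k = Suc n") (auto simp: Let_def)
qed

lemma state_Suc: "state g1 g2 \<omega> (Suc n) i =
   (state g1 g2 \<omega> n (i - 2) XOR g1 n (\<lambda>k i. k \<le> n \<and> traj g1 g2 \<omega> n k i) i
     XOR g2 n (\<lambda>k i. k \<le> n \<and> (traj g1 g2 \<omega> n k i XOR vn \<omega> k i)) i XOR wn \<omega> n i)"
  by (simp add: state_def Let_def)

lemma strat_Y: "(\<lambda>k i. k \<le> n \<and> traj g1 g2 \<omega> n k i) n = state g1 g2 \<omega> n"
  by (simp add: state_def)

lemma state_Suc_strat: "state strat1 strat2 \<omega> (Suc n) i =
   (state strat1 strat2 \<omega> n (i-2) XOR (if i \<le> 0 then state strat1 strat2 \<omega> n (i-2) else False)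
    XOR (if i \<ge> 3 then state strat1 strat2 \<omega> n (i-2) XOR vn \<omega> n (i-2) else False) XOR wn \<omega> n i)"
  unfolding state_Suc by (simp add: strat1_def strat2_def state_def[symmetric])

lemma strat_good: "(i \<ge> 2 \<or> i = 0) \<Longrightarrow> \<not> state strat1 strat2 \<omega> n i"
proof (induction n arbitrary: i)
  case 0 then show ?case by (simp add: state_def)
next
  case (Suc n)
  have IH0: "\<not> state strat1 strat2 \<omega> n 0" using Suc.IH by simp
  consider "i = 0" | "i = 2" | "i \<ge> 3" using Suc.prems by linarith
  then show ?case
  proof cases
    case 1 then show ?thesis by (simp add: state_Suc_strat bxor_def wn_def)
  next
    case 2 then show ?thesis using IH0 by (simp add: state_Suc_strat bxor_def wn_def)
  next
    case 3 then show ?thesis by (simp add: state_Suc_strat bxor_def wn_def vn_def)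
  qed
qed

lemma adm_strat: "admissible strat1 strat2"
proof -
  have "causal strat1" unfolding causal_def
  proof (intro allI impI)
    fix n :: nat and Y Y' assume "\<forall>k\<le>n. Y k = (Y' k :: sig)"
    then have "Y n = Y' n" by (metis order_refl)
    then show "strat1 n Y = strat1 n Y'" by (simp add: strat1_def fun_eq_iff)
  qed
  moreover have "causal strat2" unfolding causal_def
  proof (intro allI impI)
    fix n :: nat and Y Y' assume "\<forall>k\<le>n. Y k = (Y' k :: sig)"
    then have "Y n = Y' n" by (metis order_refl)
    then show "strat2 n Y = strat2 n Y'" by (simp add: strat2_def fun_eq_iff)
  qed
  ultimately show ?thesis by (auto simp: admissible_def strat1_def)
qed

lemma ach_strat: "achieves strat1 strat2 2"
  unfolding achieves_def
  by (rule AE_I2) (auto simp: strat_good)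

lemma traj1: "traj g1 g2 \<omega> 1 = (\<lambda>k i. False)(1 := (\<lambda>i. g1 0 (\<lambda>k i. False) i
   XOR g2 0 (\<lambda>k i. k = 0 \<and> vn \<omega> 0 i) i XOR wn \<omega> 0 i))"
proof -
  have a: "(\<lambda>k i. k \<le> 0 \<and> (False XOR vn \<omega> k i)) = (\<lambda>k i. k = 0 \<and> vn \<omega> 0 i)"
    by (auto simp: fun_eq_iff bxor_def)
  have b: "(\<lambda>k i. k \<le> (0::nat) \<and> False) = (\<lambda>k i. False)" by simp
  show ?thesis by (simp only: One_nat_def traj.simps Let_def a b) (simp add: bxor_def)
qed

definition flip :: "(noise_idx \<Rightarrow> bool) \<Rightarrow> (noise_idx \<Rightarrow> bool)" where
  "flip \<omega> = (\<lambda>j. if j \<in> {Inl (0, -1), Inr (1, -1)} then \<not> \<omega> j else \<omega> j)"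

lemma wflip: "wn (flip \<omega>) 0 i = (wn \<omega> 0 i XOR (i = -1))"
  by (auto simp: wn_def flip_def bxor_def)
lemma vflip0: "vn (flip \<omega>) 0 = vn \<omega> 0"
  by (auto simp: vn_def flip_def)
lemma vflip1: "vn (flip \<omega>) 1 i = (vn \<omega> 1 i XOR (i = -1))"
  by (auto simp: vn_def flip_def bxor_def)

lemma flip_state:
  assumes "admissible g1 g2"
  shows "state g1 g2 (flip \<omega>) 2 1 = (\<not> state g1 g2 \<omega> 2 1)"
proof -
  have n1: "\<And>Y. \<not> g1 1 Y 1" using assms by (auto simp: admissible_def)
  have Y21: "(\<lambda>k i. k \<le> 1 \<and> (traj g1 g2 (flip \<omega>) 1 k i XOR vn (flip \<omega>) k i))
           = (\<lambda>k i. k \<le> 1 \<and> (traj g1 g2 \<omega> 1 k i XOR vn \<omega> k i))"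
  proof (intro ext)
    fix k :: nat and i :: int
    show "(k \<le> 1 \<and> (traj g1 g2 (flip \<omega>) 1 k i XOR vn (flip \<omega>) k i))
           = (k \<le> 1 \<and> (traj g1 g2 \<omega> 1 k i XOR vn \<omega> k i))"
    proof (cases "k = 0")
      case True then show ?thesis using traj_stable[of 0 1 g1 g2 "flip \<omega>"] traj_stable[of 0 1 g1 g2 \<omega>]
        by (simp add: vflip0)
    next
      case False
      show ?thesis
      proof (cases "k = 1")
        case True
        have "(traj g1 g2 (flip \<omega>) 1 1 i XOR vn (flip \<omega>) 1 i) = (traj g1 g2 \<omega> 1 1 i XOR vn \<omega> 1 i)"
          unfolding traj1 vflip0 vflip1 wflip by (cases "i = -1") (auto simp: bxor_def)
        with True show ?thesis by simp
      next
        case False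
        with \<open>k \<noteq> 0\<close> show ?thesis by simp
      qed
    qed
  qed
  have st: "state g1 g2 \<omega> 2 1 = (traj g1 g2 \<omega> 1 1 (-1) XOR g2 1 (\<lambda>k i. k \<le> 1 \<and> (traj g1 g2 \<omega> 1 k i XOR vn \<omega> k i)) 1)"
    for \<omega>
    using state_Suc[of g1 g2 \<omega> 1 1] n1
    by (simp add: numeral_2_eq_2 state_def bxor_def wn_def)
  have t1: "traj g1 g2 (flip \<omega>) 1 1 (-1) = (\<not> traj g1 g2 \<omega> 1 1 (-1))"
    unfolding traj1 vflip0 wflip by (simp add: bxor_def)
  show ?thesis
    unfolding st[of "flip \<omega>"] st[of \<omega>] Y21 t1 by (simp add: bxor_def)
qed


abbreviation "Bh \<equiv> measure_pmf (bernoulli_pmf (1/2))"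

definition fl :: "noise_idx \<Rightarrow> bool \<Rightarrow> bool" where
  "fl j b = (if j \<in> {Inl (0, -1), Inr (1, -1)} then \<not> b else b)"

lemma flip_fl: "flip \<omega> = (\<lambda>j. fl j (\<omega> j))"
  by (simp add: flip_def fl_def fun_eq_iff)

lemma bern_inv: "map_pmf Not (bernoulli_pmf (1/2)) = bernoulli_pmf (1/2)"
proof (rule pmf_eqI)
  fix i :: bool
  have "{x. (\<not> x) = i} = {\<not> i}" by auto
  then show "pmf (map_pmf Not (bernoulli_pmf (1/2))) i = pmf (bernoulli_pmf (1/2)) i"
    by (simp add: pmf_map vimage_def measure_pmf_single)
qed

lemma Bh_fl: "emeasure Bh (fl j -` A) = emeasure Bh A"
proof (cases "j \<in> {Inl (0, -1), Inr (1, -1)}")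
  case True
  then have "fl j = Not" by (simp add: fl_def fun_eq_iff)
  then show ?thesis using emeasure_map_pmf[of Not "bernoulli_pmf (1/2)" A] by (simp add: bern_inv)
next
  case False
  then have "fl j = id" by (simp add: fl_def fun_eq_iff)
  then show ?thesis by simp
qed

lemma space_noise: "space noise_space = UNIV"
  by (simp add: noise_space_def space_PiM)

lemma prob_noise: "prob_space noise_space"
  unfolding noise_space_def by (rule prob_space_PiM) (rule prob_space_measure_pmf)

lemma flip_meas: "flip \<in> noise_space \<rightarrow>\<^sub>M noise_space"
  unfolding noise_space_def flip_fl
  by (rule measurable_PiM_single') (auto simp: space_PiM)

lemma flip_distr: "distr noise_space noise_space flip = noise_space"
proof (rule measure_eqI_PiM_infinite[symmetric, OF _ _ _ ])
  show "sets noise_space = sets (PiM UNIV (\<lambda>_. Bh))" by (simp add: noise_space_def)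
  show "sets (distr noise_space noise_space flip) = sets (PiM UNIV (\<lambda>_. Bh))" by (simp add: noise_space_def)
  show "finite_measure noise_space" using prob_noise by (simp add: prob_space_def)
next
  fix A J assume J: "finite J" "J \<subseteq> (UNIV :: noise_idx set)" and A: "\<And>i. i \<in> J \<Longrightarrow> A i \<in> sets Bh"
  have pre: "flip -` prod_emb UNIV (\<lambda>_. Bh) J (Pi\<^sub>E J A) \<inter> space noise_space
      = prod_emb UNIV (\<lambda>_. Bh) J (Pi\<^sub>E J (\<lambda>j. fl j -` A j))"
    by (auto simp: prod_emb_def space_noise flip_fl PiE_iff space_PiM)
  have "emeasure (distr noise_space noise_space flip) (prod_emb UNIV (\<lambda>_. Bh) J (Pi\<^sub>E J A))
      = emeasure noise_space (flip -` prod_emb UNIV (\<lambda>_. Bh) J (Pi\<^sub>E J A) \<inter> space noise_space)"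
    using J A by (intro emeasure_distr flip_meas) (auto simp: noise_space_def intro!: sets_PiM_I)
  also have "\<dots> = (\<Prod>j\<in>J. emeasure Bh (fl j -` A j))"
    unfolding pre unfolding noise_space_def using J
    by (intro emeasure_PiM_emb prob_space_measure_pmf) auto
  also have "\<dots> = (\<Prod>j\<in>J. emeasure Bh (A j))" by (simp add: Bh_fl)
  also have "\<dots> = emeasure noise_space (prod_emb UNIV (\<lambda>_. Bh) J (Pi\<^sub>E J A))"
    unfolding noise_space_def using J A
    by (intro emeasure_PiM_emb[symmetric] prob_space_measure_pmf) auto
  finally show "emeasure noise_space (prod_emb UNIV (\<lambda>_. Bh) J (Pi\<^sub>E J A)) =
      emeasure (distr noise_space noise_space flip) (prod_emb UNIV (\<lambda>_. Bh) J (Pi\<^sub>E J A))" by simp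
qed

lemma lower:
  assumes adm: "admissible g1 g2" and ach: "achieves g1 g2 d"
  shows "2 \<le> d"
proof (rule ccontr)
  assume "\<not> 2 \<le> d"
  then have d: "d \<le> 1" by simp
  have A: "AE \<omega> in noise_space. \<not> state g1 g2 \<omega> 2 1"
    using ach d unfolding achieves_def by (rule_tac AE_mp) auto
  then have "AE \<omega> in distr noise_space noise_space flip. \<not> state g1 g2 \<omega> 2 1"
    unfolding flip_distr .
  then have "AE \<omega> in noise_space. \<not> state g1 g2 (flip \<omega>) 2 1"
    by (rule AE_distrD[OF flip_meas])
  with A have "AE \<omega> in noise_space. False"
    by eventually_elim (simp add: flip_state[OF adm])
  then show False
    using prob_space.AE_False[OF prob_noise] by simp
qed

theorem proposition2:
  shows "admissible strat1 strat2 \<and> achieves strat1 strat2 2 \<and>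
         (\<forall>g1 g2 (d::int). admissible g1 g2 \<and> achieves g1 g2 d \<longrightarrow> 2 \<le> d)"
  using adm_strat ach_strat lower by blast

end
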